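(* Let $(x_k)_{k\ge0}$ be indeterminates, define $a_n=x_n$ if $n=2^k-1$ for some integer $k\ge0$ and $a_n=0$ otherwise, and let $d(n)=\det\left(a_{i+j}\right)_{i,j=0}^{n-1}$ with $d(0)=1$. For $k\ge1$ and $n\ge0$ let $\lambda_k(n)$ denote the degree of $d(n)$ in the variable $x_{2^k-1}$. Then for every $k\ge1$: $\lambda_k(n)=0$ for $0\le n\le 2^{k-1}$; $\lambda_k(2^{k-1}+i)=2i$ for $0\le i\le 2^{k-1}$; $\lambda_k(2^k+i)=2^k-2i$ for $0\le i\le 2^{k-1}$; $\lambda_k(n)=0$ for $2^k+2^{k-1}\le n\le 2^{k+1}$; and for $n>2^{k+1}$, $\lambda_k(n)=\lambda_k(n \bmod 2^{k+1})$.
   Context: The paper writes $d(n)=(-1)^{\sum_{i\ge0}\binom{\lambda_i(n)}{2}}\prod_{i\ge0}x_{2^i-1}^{\lambda_i(n)}$, so $\lambda_i(n)$ is the exponent of $x_{2^i-1}$ in $d(n)$. *)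

theory Defs
  imports "HOL-Library.Poly_Mapping" "Jordan_Normal_Form.Determinant"
begin

text \<open>Multivariate integer polynomials in indeterminates x_0, x_1, ...:
  a polynomial is a finitely supported map from monomials (finitely supported
  exponent vectors) to integer coefficients.\<close>
type_synonym mpoly = "(nat \<Rightarrow>\<^sub>0 nat) \<Rightarrow>\<^sub>0 int"

definition var :: "nat \<Rightarrow> mpoly" where
  "var v = Poly_Mapping.single (Poly_Mapping.single v 1) 1"

definition deg_in :: "nat \<Rightarrow> mpoly \<Rightarrow> nat" where
  "deg_in v p = Max (insert 0 ((\<lambda>m. Poly_Mapping.lookup m v) ` Poly_Mapping.keys p))"

definition seq_a :: "nat \<Rightarrow> mpoly" where
  "seq_a n = (if \<exists>k. n = 2 ^ k - 1 then var n else 0)"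

definition hankel_d :: "nat \<Rightarrow> mpoly" where
  "hankel_d n = det (mat n n (\<lambda>(i, j). seq_a (i + j)))"

definition lam :: "nat \<Rightarrow> nat \<Rightarrow> nat" where
  "lam k n = deg_in (2 ^ k - 1) (hankel_d n)"

lemma "hankel_d 0 = 1" by (simp add: hankel_d_def det_def)

end

theory Submission
  imports Defs
begin

definition valid :: "nat \<Rightarrow> (nat \<Rightarrow> nat) \<Rightarrow> bool" where
  "valid n p \<longleftrightarrow> p permutes {0..<n} \<and> (\<forall>i<n. \<exists>e. i + p i = 2^e - 1)"

lemma pow_pin:
  fixes x :: nat
  assumes "x = 2^e - 1" "x + 1 < 2^(K+1)" "2^(K-1) \<le> x" "K \<ge> 1"
  shows "x = 2^K - 1"
proof -
  have "(2::nat)^e < 2^(K+1)" using assms(1,2) by (metis add.commute le_add_diff_inverse one_le_numeral one_le_power)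
  hence "e < K + 1" using power_less_imp_less_exp[of 2 e "K+1"] by simp
  moreover have "(2::nat)^(K-1) < 2^e" using assms(1,3)
    by (metis Suc_le_eq add_diff_inverse_nat diff_is_0_eq' le_add_diff_inverse2 not_less_eq_eq one_le_numeral one_le_power plus_1_eq_Suc)
  hence "K - 1 < e" using power_less_imp_less_exp[of 2 "K-1" e] by simp
  ultimately have "e = K" using assms(4) by linarith
  thus ?thesis using assms(1) by simp
qed

lemma step:
  assumes v: "valid n p" and n2: "2 \<le> n" and hn: "2^(K-1) < n" and nK: "n \<le> 2^K"
  shows "\<forall>i. 2^K - n \<le> i \<and> i < n \<longrightarrow> p i = 2^K - 1 - i"
    and "\<forall>i<2^K - n. p i < 2^K - n"
proof -
  have K1: "K \<ge> 1" using n2 nK by (cases K) auto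
  define h where "h = (2::nat)^(K-1)"
  have hK: "(2::nat)^K = 2*h" using K1 unfolding h_def by (cases K) auto
  have hK1: "(2::nat)^(K+1) = 4*h" using hK by simp
  have perm: "p permutes {0..<n}" and sums: "\<forall>i<n. \<exists>e. i + p i = 2^e - 1" using v valid_def by auto
  have pin: "p i < n" if "i < n" for i using permutes_in_image[OF perm] that by auto
  have pin2: "i + p i = 2*h - 1" if ih: "i < n" "h \<le> i + p i" for i
  proof -
    obtain e where e: "i + p i = 2^e - 1" using sums ih by auto
    have "i + p i + 1 < 2^(K+1)" using pin[OF ih(1)] ih nK hK1 hK by linarith
    from pow_pin[OF e this _ K1] ih hK h_def show ?thesis by simp
  qed
  have A: "p i = 2*h - 1 - i" if "2*h - n \<le> i" "i < n" for i
  proof (cases "h \<le> i")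
    case True thus ?thesis using pin2[OF that(2)] by simp
  next
    case False
    define j where "j = 2*h - 1 - i"
    have j: "h \<le> j" "j < n" using False that hn hK h_def unfolding j_def by linarith+
    obtain x where x: "p x = j" using permutes_surj[OF perm] by (metis surj_def)
    have xn: "x < n" using permutes_in_image[OF perm, of x] x j by auto
    have "x + j = 2*h - 1" using pin2[OF xn] x j by simp
    hence "x = i" using j False unfolding j_def by linarith
    thus ?thesis using x j_def by simp
  qed
  show "\<forall>i. 2^K - n \<le> i \<and> i < n \<longrightarrow> p i = 2^K - 1 - i" using A hK by auto
  show "\<forall>i<2^K - n. p i < 2^K - n"
  proof (intro allI impI)
    fix i assume i: "i < 2^K - n"
    have inn: "i < n" using i hK hn h_def by linarith
    show "p i < 2^K - n"
    proof (rule ccontr)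
      assume "\<not> p i < 2^K - n"
      hence y: "2*h - n \<le> p i" "p i < n" using pin[OF inn] hK by auto
      define y' where "y' = 2*h - 1 - p i"
      have y': "2*h - n \<le> y'" "y' < n" using y hn hK h_def unfolding y'_def by linarith+
      have "p i \<le> 2*h - 1" using y nK hK by linarith
      hence "p y' = p i" using A[OF y'] unfolding y'_def by simp
      hence "y' = i" using permutes_inj[OF perm] by (meson injD)
      thus False using y' i hK by linarith
    qed
  qed
qed

lemma Kex: assumes "2 \<le> (n::nat)" shows "\<exists>K. 2^(K-1) < n \<and> n \<le> 2^K"
proof -
  define K where "K = (LEAST K. n \<le> (2::nat)^K)"
  have ex: "n \<le> 2^n" using less_exp[of n] by simp
  have 1: "n \<le> 2^K" unfolding K_def by (rule LeastI[of _ n], rule ex)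
  have K0: "K \<noteq> 0" using 1 assms by (intro notI) simp
  have "\<not> n \<le> 2^(K-1)" unfolding K_def by (rule not_less_Least) (use K0 K_def in auto)
  thus ?thesis using 1 by (intro exI[of _ K]) auto
qed

lemma restrict:
  assumes v: "valid n p" and n2: "2 \<le> n" and hn: "2^(K-1) < n" and nK: "n \<le> 2^K"
  shows "valid (2^K - n) (\<lambda>x. if x < 2^K - n then p x else x)"
proof -
  have perm: "p permutes {0..<n}" and sums: "\<forall>i<n. \<exists>e. i + p i = 2^e - 1" using v valid_def by auto
  have K1: "K \<ge> 1" using n2 nK by (cases K) auto
  have lt: "2^K - n < n" using hn K1 by (cases K) auto
  have B: "\<forall>i<2^K - n. p i < 2^K - n" using step(2)[OF assms] .
  have "(\<lambda>x. if x < 2^K - n then p x else x) permutes {0..<2^K - n}"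
  proof (rule inj_imp_permutes)
    show "inj_on (\<lambda>x. if x < 2^K - n then p x else x) {0..<2^K - n}"
      using permutes_inj[OF perm] by (auto simp: inj_on_def dest: injD)
  qed (use B in auto)
  moreover have "\<forall>i<2^K - n. \<exists>e. i + (if i < 2^K - n then p i else i) = 2^e - 1"
    using sums lt by auto
  ultimately show ?thesis unfolding valid_def by blast
qed

lemma count:
  assumes v: "valid n p" and n2: "2 \<le> n" and hn: "2^(K-1) < n" and nK: "n \<le> 2^K"
  shows "card {i. i < n \<and> i + p i = c} = card {i. i < 2^K - n \<and> i + p i = c}
     + (if c = 2^K - 1 then n - (2^K - n) else 0)"
proof -
  have A: "\<forall>i. 2^K - n \<le> i \<and> i < n \<longrightarrow> p i = 2^K - 1 - i" using step(1)[OF assms] .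
  have K1: "K \<ge> 1" using n2 nK by (cases K) auto
  have lt: "2^K - n < n" using hn K1 by (cases K) auto
  have eq: "{i. i < n \<and> i + p i = c} = {i. i < 2^K - n \<and> i + p i = c} \<union> (if c = 2^K - 1 then {2^K - n..<n} else {})"
  proof (cases "c = 2^K - 1")
    case True
    have "i + p i = c" if "2^K - n \<le> i" "i < n" for i using A that True nK by auto
    thus ?thesis using True lt by auto
  next
    case False
    have "i + p i \<noteq> c" if "2^K - n \<le> i" "i < n" for i using A that False nK by auto
    thus ?thesis using False lt by auto (metis not_le)
  qed
  show ?thesis unfolding eq by (subst card_Un_disjoint) auto
qed

lemma uniq: "valid n p \<Longrightarrow> valid n r \<Longrightarrow> p = r"
proof (induction n arbitrary: p r rule: less_induct)
  case (less n)
  show ?case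
  proof (cases "n \<le> 1")
    case True
    have H: "p x = x" if "valid n p" for p x
    proof -
      have perm: "p permutes {0..<n}" using that valid_def by auto
      show ?thesis
      proof (cases "x < n")
        case True
        hence "p x < n" using permutes_in_image[OF perm] by auto
        thus ?thesis using True \<open>n \<le> 1\<close> by auto
      qed (use permutes_not_in[OF perm] in auto)
    qed
    show ?thesis using H[OF less.prems(1)] H[OF less.prems(2)] by auto
  next
    case False
    then obtain K where K: "2^(K-1) < n" "n \<le> 2^K" using Kex[of n] by auto
    have n2: "2 \<le> n" using False by auto
    have K1: "K \<ge> 1" using n2 K by (cases K) auto
    have lt: "2^K - n < n" using K K1 by (cases K) auto
    have e: "(\<lambda>x. if x < 2^K - n then p x else x) = (\<lambda>x. if x < 2^K - n then r x else x)"
      using less.IH[OF lt restrict[OF less.prems(1) n2 K] restrict[OF less.prems(2) n2 K]] .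
    show ?thesis
    proof
      fix x
      show "p x = r x"
      proof (cases "x < 2^K - n")
        case True thus ?thesis using fun_cong[OF e, of x] by simp
      next
        case F: False
        show ?thesis
        proof (cases "x < n")
          case True thus ?thesis using step(1)[OF less.prems(1) n2 K] step(1)[OF less.prems(2) n2 K] F by auto
        next
          case False
          have "p permutes {0..<n}" "r permutes {0..<n}" using less.prems valid_def by auto
          thus ?thesis using False permutes_not_in[of p "{0..<n}" x] permutes_not_in[of r "{0..<n}" x] by simp
        qed
      qed
    qed
  qed
qed

lemma exist: "\<exists>p. valid n p"
proof (induction n rule: less_induct)
  case (less n)
  show ?case
  proof (cases "n \<le> 1")
    case True
    have "valid n id" unfolding valid_def using True by (auto intro: exI[of _ 0])
    thus ?thesis by blast
  next
    case False
    then obtain K where K: "2^(K-1) < n" "n \<le> 2^K" using Kex[of n] by auto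
    have n2: "2 \<le> n" using False by auto
    have K1: "K \<ge> 1" using n2 K by (cases K) auto
    have lt: "2^K - n < n" using K K1 by (cases K) auto
    obtain q where q: "valid (2^K - n) q" using less.IH[OF lt] by auto
    have qp: "q permutes {0..<2^K - n}" and qs: "\<forall>i<2^K - n. \<exists>e. i + q i = 2^e - 1" using q valid_def by auto
    have qin: "q x < 2^K - n" if "x < 2^K - n" for x using permutes_in_image[OF qp] that by auto
    define p where "p x = (if 2^K - n \<le> x \<and> x < n then 2^K - 1 - x else q x)" for x
    have "p permutes {0..<n}"
    proof (rule inj_imp_permutes)
      show "inj_on p {0..<n}"
      proof (rule inj_onI)
        fix x y assume xy: "x \<in> {0..<n}" "y \<in> {0..<n}" "p x = p y"
        show "x = y"
        proof (cases "2^K - n \<le> x")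
          case True
          show ?thesis
          proof (cases "2^K - n \<le> y")
            case True thus ?thesis using xy \<open>2^K - n \<le> x\<close> K unfolding p_def by auto
          next
            case False thus ?thesis using xy True qin[of y] K unfolding p_def by auto
          qed
        next
          case False
          show ?thesis
          proof (cases "2^K - n \<le> y")
            case True thus ?thesis using xy False qin[of x] K unfolding p_def by auto
          next
            case F2: False
            thus ?thesis using xy False permutes_inj[OF qp] unfolding p_def by (auto dest: injD)
          qed
        qed
      qed
    next
      show "finite {0..<n}" by simp
    next
      fix x assume "x \<in> {0..<n}" thus "p x \<in> {0..<n}" using qin[of x] K lt unfolding p_def by auto
    next
      fix x assume "x \<notin> {0..<n}" thus "p x = x" using permutes_not_in[OF qp, of x] lt unfolding p_def by auto
    qed
    moreover have "\<forall>i<n. \<exists>e. i + p i = 2^e - 1"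
    proof (intro allI impI)
      fix i assume i: "i < n"
      show "\<exists>e. i + p i = 2^e - 1"
      proof (cases "2^K - n \<le> i")
        case True thus ?thesis using i K unfolding p_def by (intro exI[of _ K]) auto
      next
        case False thus ?thesis using qs unfolding p_def by auto
      qed
    qed
    ultimately show ?thesis unfolding valid_def by blast
  qed
qed


definition T :: "nat \<Rightarrow> nat \<Rightarrow> nat" where
  "T k n = (let r = n mod 2^(k+1); h = 2^(k-1) in
     if r \<le> h then 0 else if r \<le> 2*h then 2*(r-h) else if r \<le> 3*h then 2*h - 2*(r-2*h) else 0)"

lemma pow_k: "1 \<le> k \<Longrightarrow> (2::nat)^k = 2*2^(k-1) \<and> (2::nat)^(k+1) = 4*2^(k-1)"
  by (cases k) auto

lemma T_lt: assumes "1 \<le> k" "n < 4*2^(k-1)"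
  shows "T k n = (let h = 2^(k-1) in
     if n \<le> h then 0 else if n \<le> 2*h then 2*(n-h) else if n \<le> 3*h then 2*h - 2*(n-2*h) else 0)"
  using assms pow_k[OF assms(1)] unfolding T_def by (simp add: Let_def)

lemma Tsym: assumes k: "1 \<le> k" and nm: "(n + m) mod 2^(k+1) = 0"
  shows "T k n = T k m"
proof -
  define h where "h = (2::nat)^(k-1)"
  have M: "(2::nat)^(k+1) = 4*h" using pow_k[OF k] h_def by simp
  have hp: "h > 0" unfolding h_def by simp
  define r where "r = n mod (4*h)"
  define s where "s = m mod (4*h)"
  have rs: "r < 4*h" "s < 4*h" unfolding r_def s_def using hp by auto
  have "(r + s) mod (4*h) = 0" unfolding r_def s_def using nm M by (simp add: mod_add_eq)
  then obtain q where q: "r + s = 4*h*q" by auto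
  have "q = 0 \<or> q = 1" using rs q hp by (cases q) (auto, cases "q - 1", auto)
  hence rs2: "r + s = 0 \<or> r + s = 4*h" using q by auto
  have Tn: "T k n = (if r \<le> h then 0 else if r \<le> 2*h then 2*(r-h) else if r \<le> 3*h then 2*h - 2*(r-2*h) else 0)"
    unfolding T_def r_def M h_def by (simp add: Let_def)
  have Tm: "T k m = (if s \<le> h then 0 else if s \<le> 2*h then 2*(s-h) else if s \<le> 3*h then 2*h - 2*(s-2*h) else 0)"
    unfolding T_def s_def M h_def by (simp add: Let_def)
  show ?thesis unfolding Tn Tm using rs2 rs by auto
qed


lemma main_count: "valid n p \<Longrightarrow> 1 \<le> k \<Longrightarrow> card {i. i < n \<and> i + p i = 2^k - 1} = T k n"
proof (induction n arbitrary: p rule: less_induct)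
  case (less n)
  note k = less.prems(2)
  define h where "h = (2::nat)^(k-1)"
  have hk: "(2::nat)^k = 2*h" "(2::nat)^(k+1) = 4*h" using pow_k[OF k] h_def by auto
  have hp: "h > 0" unfolding h_def by simp
  have Tsmall: "T k m = 0" if "m \<le> h" for m
    using T_lt[OF k, of m] that hp unfolding h_def[symmetric] by (simp add: Let_def)
  show ?case
  proof (cases "n \<le> 1")
    case True
    have perm: "p permutes {0..<n}" using less.prems valid_def by auto
    have "p 0 = 0" if "n = 1" using permutes_in_image[OF perm, of 0] that by auto
    have "{i. i < n \<and> i + p i = 2^k - 1} = {}"
    proof (intro equalityI subsetI)
      fix i assume "i \<in> {i. i < n \<and> i + p i = 2^k - 1}"
      hence i: "i < n" "i + p i = 2^k - 1" by auto
      hence "i = 0" "n = 1" using True by auto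
      hence "(0::nat) = 2*h - 1" using i \<open>n = 1 \<Longrightarrow> p 0 = 0\<close> hk by simp
      thus "i \<in> {}" using hp by simp
    qed simp
    thus ?thesis using Tsmall[of n] True hp by simp
  next
    case False
    then obtain K where K: "2^(K-1) < n" "n \<le> 2^K" using Kex[of n] by auto
    have n2: "2 \<le> n" using False by auto
    have K1: "K \<ge> 1" using n2 K by (cases K) auto
    have lt: "2^K - n < n" using K K1 by (cases K) auto
    define q where "q x = (if x < 2^K - n then p x else x)" for x
    have vq: "valid (2^K - n) q" using restrict[OF less.prems(1) n2 K] unfolding q_def .
    have cq: "card {i. i < 2^K - n \<and> i + p i = 2^k - 1} = T k (2^K - n)"
    proof -
      have "{i. i < 2^K - n \<and> i + p i = 2^k - 1} = {i. i < 2^K - n \<and> i + q i = 2^k - 1}"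
        unfolding q_def by auto
      thus ?thesis using less.IH[OF lt vq k] by simp
    qed
    have C: "card {i. i < n \<and> i + p i = 2^k - 1} = T k (2^K - n) + (if 2^k - 1 = (2::nat)^K - 1 then n - (2^K - n) else 0)"
      using count[OF less.prems(1) n2 K] cq by simp
    have ceq: "((2::nat)^k - 1 = 2^K - 1) = (k = K)"
    proof -
      have "((2::nat)^k - 1 = 2^K - 1) = ((2::nat)^k = 2^K)" using hp
        by (metis Suc_diff_1 diff_Suc_1 nat.inject one_le_numeral one_le_power le_add_diff_inverse2 zero_less_power pos2)
      thus ?thesis by simp
    qed
    consider "K < k" | "K = k" | "k < K" by linarith
    thus ?thesis
    proof cases
      case 1
      have "(2::nat)^K \<le> h" unfolding h_def using 1 by (intro power_increasing) auto
      thus ?thesis using C ceq 1 Tsmall[of n] Tsmall[of "2^K - n"] K by auto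
    next
      case 2
      have hn: "h < n" "n \<le> 2*h" using K 2 hk h_def by auto
      have "T k n = 2*(n-h)" using T_lt[OF k, of n] hn unfolding h_def[symmetric] by (simp add: Let_def)
      moreover have "2^K - n \<le> h" using hn 2 hk by simp
      ultimately show ?thesis using C ceq 2 Tsmall[of "2^K - n"] hk hn by auto
    next
      case 3
      have "(2::nat)^(k+1) dvd 2^K" using 3 by (intro le_imp_power_dvd) auto
      hence "(n + (2^K - n)) mod 2^(k+1) = 0" using K by simp
      hence "T k n = T k (2^K - n)" by (rule Tsym[OF k])
      thus ?thesis using C ceq 3 by auto
    qed
  qed
qed


lemma prod_var: "finite A \<Longrightarrow> (\<Prod>i\<in>A. var (f i)) = Poly_Mapping.single (\<Sum>i\<in>A. Poly_Mapping.single (f i) 1) 1"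
proof (induction A rule: finite_induct)
  case empty thus ?case by simp
next
  case (insert a A)
  thus ?case by (simp add: var_def mult_single)
qed

lemma hankel: assumes v: "valid n s"
  shows "hankel_d n = signof s * (\<Prod>i\<in>{0..<n}. var (i + s i))"
proof -
  let ?F = "\<lambda>p. signof p * (\<Prod>i = 0..<n. mat n n (\<lambda>(i, j). seq_a (i + j)) $$ (i, p i))"
  have d: "hankel_d n = (\<Sum>p\<in>{p. p permutes {0..<n}}. ?F p)"
    unfolding hankel_d_def by (rule det_def') simp
  have sP: "s \<in> {p. p permutes {0..<n}}" using v valid_def by auto
  have z: "?F p = 0" if "p \<in> {p. p permutes {0..<n}} - {s}" for p
  proof -
    have pp: "p permutes {0..<n}" and ps: "p \<noteq> s" using that by auto
    have "\<not> valid n p" using uniq[OF _ v] ps by auto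
    then obtain i where i: "i < n" "\<not> (\<exists>e. i + p i = 2^e - 1)" using pp valid_def by auto
    have pin: "p i < n" using permutes_in_image[OF pp] i by auto
    have "mat n n (\<lambda>(i, j). seq_a (i + j)) $$ (i, p i) = 0"
      using i pin by (simp add: seq_a_def)
    hence "(\<Prod>i = 0..<n. mat n n (\<lambda>(i, j). seq_a (i + j)) $$ (i, p i)) = 0"
      using i by (intro prod_zero) auto
    thus ?thesis by simp
  qed
  have fin: "finite {p. p permutes {0..<n}}" by (rule finite_permutations) simp
  have "(\<Sum>p\<in>{p. p permutes {0..<n}} - {s}. ?F p) = 0" by (rule sum.neutral) (use z in blast)
  hence "hankel_d n = ?F s" unfolding d sum.remove[OF fin sP] by simp
  moreover have "(\<Prod>i = 0..<n. mat n n (\<lambda>(i, j). seq_a (i + j)) $$ (i, s i)) = (\<Prod>i\<in>{0..<n}. var (i + s i))"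
  proof (rule prod.cong)
    fix i assume "i \<in> {0..<n}"
    moreover hence "s i < n" using permutes_in_image[of s "{0..<n}" i] v valid_def by auto
    moreover have "\<exists>e. i + s i = 2^e - 1" using v valid_def \<open>i \<in> {0..<n}\<close> by auto
    ultimately show "mat n n (\<lambda>(i, j). seq_a (i + j)) $$ (i, s i) = var (i + s i)"
      by (simp add: seq_a_def)
  qed simp
  ultimately show ?thesis by simp
qed

lemma lam_card: assumes v: "valid n s"
  shows "lam k n = card {i. i < n \<and> i + s i = 2^k - 1}"
proof -
  define m where "m = (\<Sum>i\<in>{0..<n}. Poly_Mapping.single (i + s i) (1::nat))"
  have "sign s = 1 \<or> sign s = -1" by (simp add: sign_def)
  hence "hankel_d n = Poly_Mapping.single m (of_int (sign s))"
    unfolding hankel[OF v] prod_var[OF finite_atLeastLessThan] m_def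
    by (auto simp: single_uminus)
  moreover have "of_int (sign s) \<noteq> (0::int)" by (simp add: sign_def)
  ultimately have "lam k n = Poly_Mapping.lookup m (2^k - 1)"
    unfolding lam_def deg_in_def by simp
  also have "\<dots> = (\<Sum>i\<in>{0..<n}. if i + s i = 2^k - 1 then (1::nat) else 0)"
    unfolding m_def lookup_sum lookup_single by (intro sum.cong) (auto simp: when_def)
  also have "\<dots> = card {i. i < n \<and> i + s i = 2^k - 1}"
  proof -
    have "{0..<n} \<inter> {i. i + s i = 2^k - 1} = {i. i < n \<and> i + s i = 2^k - 1}" by auto
    thus ?thesis by (simp add: sum.If_cases)
  qed
  finally show ?thesis .
qed

lemma lamT: "1 \<le> k \<Longrightarrow> lam k n = T k n"
  using exist[of n] lam_card main_count by metis


theorem theorem4p4: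
  fixes k :: nat
  assumes "k \<ge> 1"
  shows "(\<forall>n \<le> 2 ^ (k - 1). lam k n = 0)
       \<and> (\<forall>i \<le> 2 ^ (k - 1). lam k (2 ^ (k - 1) + i) = 2 * i)
       \<and> (\<forall>i \<le> 2 ^ (k - 1). lam k (2 ^ k + i) = 2 ^ k - 2 * i)
       \<and> (\<forall>n. 2 ^ k + 2 ^ (k - 1) \<le> n \<and> n \<le> 2 ^ (k + 1) \<longrightarrow> lam k n = 0)
       \<and> (\<forall>n > 2 ^ (k + 1). lam k n = lam k (n mod 2 ^ (k + 1)))"
proof -
  note k = assms
  define h where "h = (2::nat)^(k-1)"
  have hk: "(2::nat)^k = 2*h" "(2::nat)^(k+1) = 4*h" using pow_k[OF k] h_def by auto
  have hp: "h > 0" unfolding h_def by simp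
  have TL: "T k n = (if n \<le> h then 0 else if n \<le> 2*h then 2*(n-h) else if n \<le> 3*h then 2*h - 2*(n-2*h) else 0)"
    if "n < 4*h" for n using T_lt[OF k that[unfolded h_def]] unfolding h_def[symmetric] by (simp add: Let_def)
  have L: "lam k n = T k n" for n using lamT[OF k] .
  have P1: "\<forall>n \<le> 2 ^ (k - 1). lam k n = 0"
    using TL hp unfolding L h_def[symmetric] by auto
  have P2: "\<forall>i \<le> 2 ^ (k - 1). lam k (2 ^ (k - 1) + i) = 2 * i"
  proof (intro allI impI)
    fix i :: nat assume "i \<le> 2^(k-1)"
    thus "lam k (2 ^ (k - 1) + i) = 2 * i" using TL[of "h + i"] hp unfolding L h_def[symmetric] by auto
  qed
  have P3: "\<forall>i \<le> 2 ^ (k - 1). lam k (2 ^ k + i) = 2 ^ k - 2 * i"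
  proof (intro allI impI)
    fix i :: nat assume "i \<le> 2^(k-1)"
    thus "lam k (2 ^ k + i) = 2 ^ k - 2 * i" using TL[of "2*h + i"] hp unfolding L hk h_def[symmetric] by auto
  qed
  have P4: "\<forall>n. 2 ^ k + 2 ^ (k - 1) \<le> n \<and> n \<le> 2 ^ (k + 1) \<longrightarrow> lam k n = 0"
  proof (intro allI impI)
    fix n :: nat assume n: "2 ^ k + 2 ^ (k - 1) \<le> n \<and> n \<le> 2 ^ (k + 1)"
    show "lam k n = 0"
    proof (cases "n = 4*h")
      case True
      thus ?thesis unfolding L T_def using hk by (simp add: Let_def)
    next
      case False
      thus ?thesis using TL[of n] n hp unfolding L hk h_def[symmetric] by auto
    qed
  qed
  have P5: "\<forall>n > 2 ^ (k + 1). lam k n = lam k (n mod 2 ^ (k + 1))"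
    unfolding L T_def by (simp add: Let_def)
  show ?thesis using P1 P2 P3 P4 P5 by blast
qed

end
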